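(* Let $S\subset\mathbb{T}^2$ be compact and suppose no non-zero positive Borel measure in $A_{\vec 0}(\mathbb{D}^2)^\perp$ has support contained in $S$. Then for every positive finite Borel measure $\mu$ on $\mathbb{T}^2$ with support contained in $S$, the closed subspace of $L^2(d\mu)$ spanned by $A_{\vec 0}(\mathbb{D}^2)$ equals the closed subspace of $L^2(d\mu)$ spanned by $A(\mathbb{D}^2)$.
   Context: $A(\mathbb{D}^2)$ is the bidisc algebra (continuous on $\overline{\mathbb{D}}^2$, holomorphic on $\mathbb{D}^2$), regarded as a subspace of $C(\mathbb{T}^2)$; $A_{\vec 0}(\mathbb{D}^2)=\{z_1z_2 f: f\in A(\mathbb{D}^2)\}$; $A_{\vec 0}(\mathbb{D}^2)^\perp$ is the set of complex Borel measures of bounded variation on $\mathbb{T}^2$ annihilating every function in $A_{\vec 0}(\mathbb{D}^2)$. *)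

theory Defs
  imports "HOL-Complex_Analysis.Complex_Analysis" "HOL-Probability.Probability"
begin

definition torus2 :: "(complex \<times> complex) set" where
  "torus2 = {p. cmod (fst p) = 1 \<and> cmod (snd p) = 1}"

text \<open>The bidisc algebra A(D^2): continuous on the closed bidisc, holomorphic on the
  open bidisc (holomorphic in each variable separately, which together with continuity
  is the usual notion of holomorphy, by Osgood's lemma).\<close>
definition bidisc_algebra :: "(complex \<times> complex \<Rightarrow> complex) set" where
  "bidisc_algebra = {f. continuous_on (cball 0 1 \<times> cball 0 1) f \<and>
      (\<forall>w \<in> ball 0 1. (\<lambda>z. f (z, w)) holomorphic_on ball 0 1) \<and>
      (\<forall>z \<in> ball 0 1. (\<lambda>w. f (z, w)) holomorphic_on ball 0 1)}"

definition bidisc_algebra0 :: "(complex \<times> complex \<Rightarrow> complex) set" where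
  "bidisc_algebra0 = {(\<lambda>p. fst p * snd p * f p) | f. f \<in> bidisc_algebra}"

definition borel_measure_on_T2 :: "(complex \<times> complex) measure \<Rightarrow> bool" where
  "borel_measure_on_T2 \<mu> \<longleftrightarrow> sets \<mu> = sets (restrict_space borel torus2)"

text \<open>The closed subspace of L^2(mu) spanned by a family F (which here is already a linear
  subspace), represented by the set of all square-integrable representatives that are
  L^2(mu)-limits of elements of F.\<close>
definition L2_closure ::
  "(complex \<times> complex) measure \<Rightarrow> (complex \<times> complex \<Rightarrow> complex) set
     \<Rightarrow> (complex \<times> complex \<Rightarrow> complex) set" where
  "L2_closure \<mu> F = {h. h \<in> borel_measurable \<mu> \<and> integrable \<mu> (\<lambda>x. (cmod (h x))\<^sup>2) \<and>
      (\<forall>e>0. \<exists>f\<in>F. (\<integral>x. (cmod (h x - f x))\<^sup>2 \<partial>\<mu>) < e)}"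

end

theory Submission
  imports Defs
begin


lemma torus2_eq: "torus2 = sphere 0 1 \<times> sphere 0 1"
  by (auto simp: torus2_def)

lemma compact_torus2: "compact torus2"
  unfolding torus2_eq by (intro compact_Times compact_sphere)

lemma torus2_sub: "torus2 \<subseteq> cball 0 1 \<times> cball 0 1"
  by (auto simp: torus2_def)

lemma A_cont: "f \<in> bidisc_algebra \<Longrightarrow> continuous_on torus2 f"
  unfolding bidisc_algebra_def using continuous_on_subset torus2_sub by blast

lemma A_bdd: assumes "f \<in> bidisc_algebra" shows "\<exists>B. \<forall>x\<in>torus2. cmod (f x) \<le> B"
proof -
  have "compact (f ` torus2)" using compact_continuous_image[OF A_cont[OF assms] compact_torus2] .
  then have "bounded (f ` torus2)" by (rule compact_imp_bounded)
  then show ?thesis unfolding bounded_iff by auto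
qed

lemma A_one: "(\<lambda>_. 1) \<in> bidisc_algebra"
  unfolding bidisc_algebra_def by (auto intro: continuous_intros)

lemma A_mult: assumes "f \<in> bidisc_algebra" "g \<in> bidisc_algebra"
  shows "(\<lambda>x. f x * g x) \<in> bidisc_algebra"
  using assms unfolding bidisc_algebra_def
  by (auto intro!: continuous_on_mult holomorphic_on_mult)

lemma A_add: assumes "f \<in> bidisc_algebra" "g \<in> bidisc_algebra"
  shows "(\<lambda>x. f x + g x) \<in> bidisc_algebra"
  using assms unfolding bidisc_algebra_def
  by (auto intro!: continuous_on_add holomorphic_on_add)

lemma A_cmult: assumes "f \<in> bidisc_algebra"
  shows "(\<lambda>x. c * f x) \<in> bidisc_algebra"
  using assms unfolding bidisc_algebra_def
  by (auto intro!: continuous_on_mult holomorphic_on_mult continuous_intros)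

lemma A_z: "(\<lambda>p. fst p * snd p) \<in> bidisc_algebra"
  unfolding bidisc_algebra_def by (auto intro!: continuous_intros holomorphic_intros)

lemma A0_sub: "g \<in> bidisc_algebra0 \<Longrightarrow> g \<in> bidisc_algebra"
  unfolding bidisc_algebra0_def using A_mult[OF A_z] by auto

lemma A0_zero: "(\<lambda>_. 0) \<in> bidisc_algebra0"
  unfolding bidisc_algebra0_def
  by (rule CollectI, rule exI[of _ "\<lambda>_. 0"]) (auto simp: bidisc_algebra_def)

lemma A0_add: assumes "f \<in> bidisc_algebra0" "g \<in> bidisc_algebra0"
  shows "(\<lambda>x. f x + g x) \<in> bidisc_algebra0"
proof -
  obtain a b where "a \<in> bidisc_algebra" "b \<in> bidisc_algebra" "f = (\<lambda>p. fst p * snd p * a p)"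
     "g = (\<lambda>p. fst p * snd p * b p)" using assms unfolding bidisc_algebra0_def by auto
  then show ?thesis unfolding bidisc_algebra0_def
    by (intro CollectI exI[of _ "\<lambda>x. a x + b x"]) (auto simp: A_add algebra_simps)
qed

lemma A0_cmult: assumes "f \<in> bidisc_algebra0"
  shows "(\<lambda>x. c * f x) \<in> bidisc_algebra0"
proof -
  obtain a where "a \<in> bidisc_algebra" "f = (\<lambda>p. fst p * snd p * a p)"
     using assms unfolding bidisc_algebra0_def by auto
  then show ?thesis unfolding bidisc_algebra0_def
    by (intro CollectI exI[of _ "\<lambda>x. c * a x"]) (auto simp: A_cmult algebra_simps)
qed

lemma A0_mult: assumes "f \<in> bidisc_algebra0" "g \<in> bidisc_algebra"
  shows "(\<lambda>x. f x * g x) \<in> bidisc_algebra0"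
proof -
  obtain a where "a \<in> bidisc_algebra" "f = (\<lambda>p. fst p * snd p * a p)"
     using assms unfolding bidisc_algebra0_def by auto
  then show ?thesis unfolding bidisc_algebra0_def using assms(2)
    by (intro CollectI exI[of _ "\<lambda>x. a x * g x"]) (auto simp: A_mult algebra_simps)
qed

lemma A0_diff: assumes "f \<in> bidisc_algebra0" "g \<in> bidisc_algebra0"
  shows "(\<lambda>x. f x - g x) \<in> bidisc_algebra0"
  using A0_add[OF assms(1) A0_cmult[OF assms(2), of "-1"]] by simp



definition N2 :: "'a measure \<Rightarrow> ('a \<Rightarrow> complex) \<Rightarrow> real" where
  "N2 M u = (\<integral>x. (cmod (u x))\<^sup>2 \<partial>M)"

definition L2 :: "'a measure \<Rightarrow> ('a \<Rightarrow> complex) \<Rightarrow> bool" where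
  "L2 M u \<longleftrightarrow> u \<in> borel_measurable M \<and> integrable M (\<lambda>x. (cmod (u x))\<^sup>2)"

lemma sq_sum_le: "((a::real) + b)\<^sup>2 \<le> 2 * a\<^sup>2 + 2 * b\<^sup>2"
proof -
  have "0 \<le> (a - b)\<^sup>2" by simp
  then have "0 \<le> a*a - 2*(a*b) + b*b" unfolding power2_eq_square by (simp add: algebra_simps)
  then show ?thesis unfolding power2_eq_square by (simp add: algebra_simps)
qed

lemma prod_le_sq: "(a::real) * b \<le> \<bar>a\<^sup>2 + b\<^sup>2\<bar>"
proof -
  have "0 \<le> (a - b)\<^sup>2" by simp
  then have "2 * (a * b) \<le> a\<^sup>2 + b\<^sup>2" unfolding power2_eq_square by (simp add: algebra_simps)
  moreover have "0 \<le> a\<^sup>2" "0 \<le> b\<^sup>2" by simp_all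
  ultimately show ?thesis by linarith
qed

lemma N2_nonneg: "N2 M u \<ge> 0"
  unfolding N2_def by (rule integral_nonneg_AE) auto

lemma L2_add: assumes "L2 M u" "L2 M v" shows "L2 M (\<lambda>x. u x + v x)"
  unfolding L2_def
proof
  show "(\<lambda>x. u x + v x) \<in> borel_measurable M" using assms unfolding L2_def by auto
  show "integrable M (\<lambda>x. (cmod (u x + v x))\<^sup>2)"
  proof (rule Bochner_Integration.integrable_bound)
    show "integrable M (\<lambda>x. 2 * (cmod (u x))\<^sup>2 + 2 * (cmod (v x))\<^sup>2)"
      using assms unfolding L2_def by auto
    show "(\<lambda>x. (cmod (u x + v x))\<^sup>2) \<in> borel_measurable M" using assms unfolding L2_def by auto
    show "AE x in M. norm ((cmod (u x + v x))\<^sup>2) \<le> norm (2 * (cmod (u x))\<^sup>2 + 2 * (cmod (v x))\<^sup>2)"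
    proof (rule AE_I2)
      fix x
      have "cmod (u x + v x) \<le> cmod (u x) + cmod (v x)" by (rule norm_triangle_ineq)
      then have "(cmod (u x + v x))\<^sup>2 \<le> (cmod (u x) + cmod (v x))\<^sup>2"
        by (simp add: power_mono)
      also have "\<dots> \<le> 2 * (cmod (u x))\<^sup>2 + 2 * (cmod (v x))\<^sup>2"
        by (rule sq_sum_le)
      finally show "norm ((cmod (u x + v x))\<^sup>2) \<le> norm (2 * (cmod (u x))\<^sup>2 + 2 * (cmod (v x))\<^sup>2)"
        by simp
    qed
  qed
qed

lemma N2_add_le: assumes "L2 M u" "L2 M v" shows "N2 M (\<lambda>x. u x + v x) \<le> 2 * N2 M u + 2 * N2 M v"
proof -
  have "N2 M (\<lambda>x. u x + v x) \<le> (\<integral>x. 2 * (cmod (u x))\<^sup>2 + 2 * (cmod (v x))\<^sup>2 \<partial>M)"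
    unfolding N2_def
  proof (rule integral_mono)
    show "integrable M (\<lambda>x. (cmod (u x + v x))\<^sup>2)" using L2_add[OF assms] unfolding L2_def by auto
    show "integrable M (\<lambda>x. 2 * (cmod (u x))\<^sup>2 + 2 * (cmod (v x))\<^sup>2)"
      using assms unfolding L2_def by auto
    fix x
    have "cmod (u x + v x) \<le> cmod (u x) + cmod (v x)" by (rule norm_triangle_ineq)
    then have "(cmod (u x + v x))\<^sup>2 \<le> (cmod (u x) + cmod (v x))\<^sup>2"
      by (simp add: power_mono)
    also have "\<dots> \<le> 2 * (cmod (u x))\<^sup>2 + 2 * (cmod (v x))\<^sup>2"
      by (rule sq_sum_le)
    finally show "(cmod (u x + v x))\<^sup>2 \<le> 2 * (cmod (u x))\<^sup>2 + 2 * (cmod (v x))\<^sup>2" .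
  qed
  also have "\<dots> = 2 * N2 M u + 2 * N2 M v" unfolding N2_def using assms unfolding L2_def by simp
  finally show ?thesis .
qed

lemma L2_bmult: assumes "L2 M u" "\<phi> \<in> borel_measurable M" "\<And>x. x \<in> space M \<Longrightarrow> cmod (\<phi> x) \<le> B"
  shows "L2 M (\<lambda>x. \<phi> x * u x)" "N2 M (\<lambda>x. \<phi> x * u x) \<le> B\<^sup>2 * N2 M u"
proof -
  have le: "(cmod (\<phi> x * u x))\<^sup>2 \<le> B\<^sup>2 * (cmod (u x))\<^sup>2" if "x \<in> space M" for x
  proof -
    have "cmod (\<phi> x * u x) \<le> B * cmod (u x)" unfolding norm_mult
      using assms(3)[OF that] by (simp add: mult_right_mono)
    then have "(cmod (\<phi> x * u x))\<^sup>2 \<le> (B * cmod (u x))\<^sup>2" by (simp add: power_mono)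
    then show ?thesis by (simp add: power_mult_distrib)
  qed
  have i: "integrable M (\<lambda>x. (cmod (\<phi> x * u x))\<^sup>2)"
  proof (rule Bochner_Integration.integrable_bound)
    show "integrable M (\<lambda>x. B\<^sup>2 * (cmod (u x))\<^sup>2)" using assms unfolding L2_def by auto
    show "(\<lambda>x. (cmod (\<phi> x * u x))\<^sup>2) \<in> borel_measurable M" using assms unfolding L2_def by auto
    show "AE x in M. norm ((cmod (\<phi> x * u x))\<^sup>2) \<le> norm (B\<^sup>2 * (cmod (u x))\<^sup>2)"
      using le by (intro AE_I2) auto
  qed
  then show "L2 M (\<lambda>x. \<phi> x * u x)" using assms unfolding L2_def by auto
  have "N2 M (\<lambda>x. \<phi> x * u x) \<le> (\<integral>x. B\<^sup>2 * (cmod (u x))\<^sup>2 \<partial>M)"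
    unfolding N2_def by (rule integral_mono) (use i assms le in \<open>auto simp: L2_def\<close>)
  then show "N2 M (\<lambda>x. \<phi> x * u x) \<le> B\<^sup>2 * N2 M u" by (simp add: N2_def)
qed

lemma L2_cmult: assumes "L2 M u" shows "L2 M (\<lambda>x. c * u x)"
  using L2_bmult(1)[OF assms, of "\<lambda>_. c" "cmod c"] by simp

lemma L2_diff: assumes "L2 M u" "L2 M v" shows "L2 M (\<lambda>x. u x - v x)"
  using L2_add[OF assms(1) L2_cmult[OF assms(2), of "-1"]] by simp

lemma L2_cnj: "L2 M u \<Longrightarrow> L2 M (\<lambda>x. cnj (u x))"
proof -
  assume a: "L2 M u"
  have c: "continuous_on UNIV cnj" by (intro continuous_on_cnj continuous_on_id)
  have "(\<lambda>x. cnj (u x)) \<in> borel_measurable M"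
    by (rule borel_measurable_continuous_on[OF c]) (use a in \<open>simp add: L2_def\<close>)
  then show ?thesis using a unfolding L2_def by simp
qed

lemma N2_cnj: "N2 M (\<lambda>x. cnj (u x)) = N2 M u"
  unfolding N2_def by simp

lemma CS: assumes "L2 M u" "L2 M v"
  shows "integrable M (\<lambda>x. u x * v x)" "cmod (\<integral>x. u x * v x \<partial>M) \<le> sqrt (N2 M u * N2 M v)"
    "(\<integral>x. cmod (u x * v x) \<partial>M) \<le> sqrt (N2 M u * N2 M v)"
proof -
  have mu: "u \<in> borel_measurable M" and mv: "v \<in> borel_measurable M"
    and iu: "integrable M (\<lambda>x. (cmod (u x))\<^sup>2)" and iv: "integrable M (\<lambda>x. (cmod (v x))\<^sup>2)"
    using assms unfolding L2_def by auto
  have int: "integrable M (\<lambda>x. u x * v x)"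
  proof (rule Bochner_Integration.integrable_bound)
    show "integrable M (\<lambda>x. (cmod (u x))\<^sup>2 + (cmod (v x))\<^sup>2)" using iu iv by auto
    show "(\<lambda>x. u x * v x) \<in> borel_measurable M" using mu mv by auto
    show "AE x in M. norm (u x * v x) \<le> norm ((cmod (u x))\<^sup>2 + (cmod (v x))\<^sup>2)"
    proof (rule AE_I2)
      fix x
      have "cmod (u x) * cmod (v x) \<le> \<bar>(cmod (u x))\<^sup>2 + (cmod (v x))\<^sup>2\<bar>" by (rule prod_le_sq)
      then show "norm (u x * v x) \<le> norm ((cmod (u x))\<^sup>2 + (cmod (v x))\<^sup>2)"
        by (simp only: norm_mult real_norm_def)
    qed
  qed
  then show "integrable M (\<lambda>x. u x * v x)" .
  have "(\<integral>\<^sup>+x. ennreal (cmod (u x)) * ennreal (cmod (v x)) \<partial>M)\<^sup>2 \<le>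
        (\<integral>\<^sup>+x. ennreal (cmod (u x))^2 \<partial>M) * (\<integral>\<^sup>+x. ennreal (cmod (v x))^2 \<partial>M)"
    by (rule Cauchy_Schwarz_nn_integral) (use mu mv in auto)
  moreover have "(\<integral>\<^sup>+x. ennreal (cmod (u x)) * ennreal (cmod (v x)) \<partial>M) = ennreal (\<integral>x. cmod (u x * v x) \<partial>M)"
    by (subst nn_integral_eq_integral[symmetric]) (use integrable_norm[OF int] in \<open>auto simp: ennreal_mult' norm_mult\<close>)
  moreover have "(\<integral>\<^sup>+x. ennreal (cmod (u x))^2 \<partial>M) = ennreal (N2 M u)"
    unfolding N2_def
    by (subst nn_integral_eq_integral[symmetric]) (use iu in \<open>auto simp: ennreal_power\<close>)
  moreover have "(\<integral>\<^sup>+x. ennreal (cmod (v x))^2 \<partial>M) = ennreal (N2 M v)"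
    unfolding N2_def
    by (subst nn_integral_eq_integral[symmetric]) (use iv in \<open>auto simp: ennreal_power\<close>)
  ultimately have "ennreal ((\<integral>x. cmod (u x * v x) \<partial>M)\<^sup>2) \<le> ennreal (N2 M u * N2 M v)"
    by (simp add: ennreal_power[symmetric] ennreal_mult'[symmetric] N2_nonneg integral_nonneg_AE)
  then have "(\<integral>x. cmod (u x * v x) \<partial>M)\<^sup>2 \<le> N2 M u * N2 M v"
    by (simp add: N2_nonneg ennreal_le_iff)
  then show "(\<integral>x. cmod (u x * v x) \<partial>M) \<le> sqrt (N2 M u * N2 M v)"
    using real_le_rsqrt by blast
  moreover have "cmod (\<integral>x. u x * v x \<partial>M) \<le> (\<integral>x. cmod (u x * v x) \<partial>M)"
    by (rule integral_norm_bound)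
  ultimately show "cmod (\<integral>x. u x * v x \<partial>M) \<le> sqrt (N2 M u * N2 M v)" by linarith
qed



lemma lim_aux: "(\<lambda>n. sqrt (c * inverse (real (Suc n)))) \<longlonglongrightarrow> 0"
proof -
  have "(\<lambda>n. c * inverse (real (Suc n))) \<longlonglongrightarrow> c * 0"
    by (intro tendsto_mult tendsto_const LIMSEQ_inverse_real_of_nat)
  then have "(\<lambda>n. sqrt (c * inverse (real (Suc n)))) \<longlonglongrightarrow> sqrt (c * 0)"
    by (rule tendsto_real_sqrt)
  then show ?thesis by simp
qed

lemma lim_aux2: "(\<lambda>n. c * inverse (real (Suc n))) \<longlonglongrightarrow> 0"
proof -
  have "(\<lambda>n. c * inverse (real (Suc n))) \<longlonglongrightarrow> c * 0"
    by (intro tendsto_mult tendsto_const LIMSEQ_inverse_real_of_nat)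
  then show ?thesis by simp
qed

lemma ev_small: assumes "f \<longlonglongrightarrow> (0::real)" "e > 0" obtains N where "\<And>n. n \<ge> N \<Longrightarrow> f n < e"
proof -
  have "eventually (\<lambda>n. f n < e) sequentially" using order_tendstoD(2)[OF assms] .
  then show ?thesis using that unfolding eventually_sequentially by blast
qed

lemma le_lim0: assumes "\<And>n. (X::real) \<le> e n" "e \<longlonglongrightarrow> 0" shows "X \<le> 0"
  using LIMSEQ_le_const[OF assms(2)] assms(1) by blast

lemma inv_mono: "i \<ge> n \<Longrightarrow> inverse (real (Suc i)) \<le> inverse (real (Suc n))"
  by (simp add: le_imp_inverse_le)

lemma par_id: "(cmod (a - b))\<^sup>2 = 2 * (cmod (1 - a))\<^sup>2 + 2 * (cmod (1 - b))\<^sup>2 - 4 * (cmod (1 - (1/2) * (a + b)))\<^sup>2"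
  by (simp only: cmod_power2) (simp add: power2_eq_square field_simps)

lemma exp_id: "(cmod (a + t * p))\<^sup>2 = (cmod a)\<^sup>2 + 2 * Re (t * (p * cnj a)) + (cmod t)\<^sup>2 * (cmod p)\<^sup>2"
  by (simp only: cmod_power2) (simp add: power2_eq_square algebra_simps)

locale L2ctx = finite_measure M for M :: "(complex \<times> complex) measure" +
  assumes sets_M: "sets M = sets (restrict_space borel torus2)"
begin

lemma space_M: "space M = torus2"
  using sets_eq_imp_space_eq[OF sets_M] by (simp add: space_restrict_space)

lemma A_meas: "f \<in> bidisc_algebra \<Longrightarrow> f \<in> borel_measurable M"
  using borel_measurable_continuous_on_restrict[OF A_cont] measurable_cong_sets[OF sets_M refl] by blast

lemma A_bounded: assumes "f \<in> bidisc_algebra" obtains B where "B \<ge> 0" "\<And>x. x \<in> space M \<Longrightarrow> cmod (f x) \<le> B"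
proof -
  obtain B where "\<forall>x\<in>torus2. cmod (f x) \<le> B" using A_bdd[OF assms] by blast
  then show ?thesis using that[of "max B 0"] space_M by force
qed

lemma bounded_L2: assumes "f \<in> borel_measurable M" "\<And>x. x \<in> space M \<Longrightarrow> cmod (f x) \<le> B"
  shows "L2 M f"
  unfolding L2_def
proof
  show "f \<in> borel_measurable M" by fact
  show "integrable M (\<lambda>x. (cmod (f x))\<^sup>2)"
  proof (rule integrable_const_bound[where B="B\<^sup>2"])
    show "AE x in M. norm ((cmod (f x))\<^sup>2) \<le> B\<^sup>2"
      using assms(2) by (intro AE_I2) (auto intro!: power_mono)
  qed (use assms in auto)
qed

lemma A_L2: assumes "f \<in> bidisc_algebra" shows "L2 M f"
  using A_bounded[OF assms] bounded_L2[OF A_meas[OF assms]] by metis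

lemma A0_L2: "f \<in> bidisc_algebra0 \<Longrightarrow> L2 M f"
  using A_L2 A0_sub by blast

lemma L2_meas: "L2 M f \<Longrightarrow> f \<in> borel_measurable M"
  by (simp add: L2_def)

lemma N2_one: "N2 M (\<lambda>_. 1) = measure M (space M)"
  by (simp add: N2_def)

lemma L1_bound: assumes "L2 M u" shows "(\<integral>x. norm (u x) \<partial>M) \<le> sqrt (N2 M u * measure M (space M))"
  using CS(3)[OF assms A_L2[OF A_one]] by (simp add: N2_one)

lemma int_diff_mult: assumes "L2 M a" "L2 M b" "L2 M c"
  shows "(\<integral>x. a x * c x \<partial>M) - (\<integral>x. b x * c x \<partial>M) = (\<integral>x. (a x - b x) * c x \<partial>M)"
  using CS(1)[OF assms(1,3)] CS(1)[OF assms(2,3)] by (simp add: algebra_simps)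

end



lemma A_diff1: assumes "f \<in> bidisc_algebra" shows "(\<lambda>x. 1 - f x) \<in> bidisc_algebra"
  using A_add[OF A_one A_cmult[OF assms, of "-1"]] by simp

lemma Re_bound: "Re (t * z) \<ge> - (cmod t * cmod z)"
  using abs_Re_le_cmod[of "t * z"] by (simp add: norm_mult)

lemma int3: "integrable M a \<Longrightarrow> integrable M b \<Longrightarrow> integrable M d \<Longrightarrow>
  (\<integral>x. a x + 2 * b x + (c::real) * d x \<partial>M) = (\<integral>x. a x \<partial>M) + 2 * (\<integral>x. b x \<partial>M) + c * (\<integral>x. d x \<partial>M)"
  by simp

context L2ctx begin

lemma A_int: assumes "f \<in> bidisc_algebra" shows "integrable M f"
proof -
  obtain B where "\<And>x. x \<in> space M \<Longrightarrow> cmod (f x) \<le> B" using A_bounded[OF assms] by blast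
  then show ?thesis by (intro integrable_const_bound[where B=B] AE_I2 A_meas[OF assms]) auto
qed

lemma key:
  assumes H: "\<And>h. L2 M h \<Longrightarrow> (\<forall>\<phi>\<in>bidisc_algebra0. (\<integral>x. (cmod (h x))\<^sup>2 *\<^sub>R \<phi> x \<partial>M) = 0) \<Longrightarrow> N2 M h = 0"
    and "\<delta> > 0"
  shows "\<exists>g\<in>bidisc_algebra0. N2 M (\<lambda>x. 1 - g x) < \<delta>"
proof -
  define A0 where "A0 = bidisc_algebra0"
  define D where "D g = N2 M (\<lambda>x. 1 - g x)" for g
  define d where "d = Inf (D ` A0)"
  define mu where "mu = measure M (space M)"
  have mu0: "mu \<ge> 0" by (simp add: mu_def)
  have oneL2: "L2 M (\<lambda>_. 1)" using A_L2[OF A_one] .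
  have bdd: "bdd_below (D ` A0)" by (rule bdd_belowI[of _ 0]) (auto simp: D_def N2_nonneg)
  have dle: "d \<le> D g" if "g \<in> A0" for g unfolding d_def by (rule cInf_lower) (use that bdd in auto)
  have ne: "D ` A0 \<noteq> {}" using A0_zero A0_def by auto
  have "\<exists>g. g \<in> A0 \<and> D g < d + inverse (real (Suc n))" for n
  proof -
    have "Inf (D ` A0) < d + inverse (real (Suc n))" unfolding d_def by simp
    from cInf_lessD[OF ne this] show ?thesis by auto
  qed
  then obtain g where gA0: "\<And>n. g n \<in> A0" and gD: "\<And>n. D (g n) < d + inverse (real (Suc n))"
    by metis
  have gL2: "L2 M (g n)" for n using A0_L2 gA0 A0_def by auto
  have g1L2: "L2 M (\<lambda>x. 1 - g n x)" for n by (rule L2_diff[OF oneL2 gL2])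
  have cauchy: "N2 M (\<lambda>x. g i x - g j x) \<le> 2 * inverse (real (Suc i)) + 2 * inverse (real (Suc j))" for i j
  proof -
    define m where "m = (\<lambda>x. (1/2) * (g i x + g j x))"
    have mA0: "m \<in> A0" unfolding m_def A0_def
      by (rule A0_cmult, rule A0_add) (use gA0 A0_def in auto)
    have mL2: "L2 M (\<lambda>x. 1 - m x)" using L2_diff[OF oneL2 A0_L2[OF mA0[unfolded A0_def]]] .
    have "N2 M (\<lambda>x. g i x - g j x) = (\<integral>x. 2 * (cmod (1 - g i x))\<^sup>2 + 2 * (cmod (1 - g j x))\<^sup>2
          - 4 * (cmod (1 - m x))\<^sup>2 \<partial>M)"
      unfolding N2_def m_def by (intro Bochner_Integration.integral_cong refl) (rule par_id)
    also have "\<dots> = 2 * D (g i) + 2 * D (g j) - 4 * D m"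
      using g1L2[of i] g1L2[of j] mL2 unfolding D_def N2_def L2_def by simp
    finally have "N2 M (\<lambda>x. g i x - g j x) = 2 * D (g i) + 2 * D (g j) - 4 * D m" .
    moreover have "d \<le> D m" using dle mA0 by auto
    ultimately show ?thesis using gD[of i] gD[of j] by linarith
  qed
  have L1c: "\<exists>N. \<forall>i\<ge>N. \<forall>j\<ge>N. (\<integral>x. norm (g i x - g j x) \<partial>M) < e" if e0: "e > 0" for e
  proof -
    obtain N where N: "\<And>n. n \<ge> N \<Longrightarrow> sqrt ((4 * mu) * inverse (real (Suc n))) < e"
      using ev_small[OF lim_aux e0] by blast
    have "(\<integral>x. norm (g i x - g j x) \<partial>M) < e" if "i \<ge> N" "j \<ge> N" for i j
    proof -
      have "(\<integral>x. norm (g i x - g j x) \<partial>M) \<le> sqrt (N2 M (\<lambda>x. g i x - g j x) * mu)"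
        unfolding mu_def by (rule L1_bound[OF L2_diff[OF gL2 gL2]])
      also have "\<dots> \<le> sqrt ((4 * mu) * inverse (real (Suc N)))"
      proof (rule real_sqrt_le_mono)
        have "N2 M (\<lambda>x. g i x - g j x) \<le> 4 * inverse (real (Suc N))"
          using cauchy[of i j] inv_mono[OF that(1)] inv_mono[OF that(2)] by linarith
        then show "N2 M (\<lambda>x. g i x - g j x) * mu \<le> (4 * mu) * inverse (real (Suc N))"
          using mult_right_mono[OF _ mu0] by (metis mult.commute mult.left_commute)
      qed
      also have "\<dots> < e" using N by auto
      finally show ?thesis .
    qed
    then show ?thesis by blast
  qed
  obtain r where r: "strict_mono r" and aec: "AE x in M. Cauchy (\<lambda>i. g (r i) x)"
  proof -
    have gi: "\<And>n. integrable M (g n)" using gA0 A0_sub A_int unfolding A0_def by blast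
    show ?thesis by (rule cauchy_L1_AE_cauchy_subseq[where s=g and M=M, OF gi L1c]) (use that in auto)
  qed
  define G where "G x = lim (\<lambda>i. g (r i) x)" for x
  have Gm: "G \<in> borel_measurable M" unfolding G_def
    by (rule borel_measurable_lim_metric) (use gL2 L2_meas in auto)
  have aeG: "AE x in M. (\<lambda>i. g (r i) x) \<longlonglongrightarrow> G x"
    using aec by eventually_elim (simp add: G_def Cauchy_convergent_iff convergent_LIMSEQ_iff)
  have rge: "n \<le> r n" for n using seq_suble[OF r] .
  have rmono: "r n \<le> r m" if "n \<le> m" for n m using r that by (simp add: strict_mono_less_eq)
  have Gc: "L2 M (\<lambda>x. G x - g (r n) x) \<and> N2 M (\<lambda>x. G x - g (r n) x) \<le> 4 * inverse (real (Suc n))" for n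
  proof -
    define F where "F m x = ennreal ((cmod (g (r m) x - g (r n) x))\<^sup>2)" for m x
    have Fle: "(\<integral>\<^sup>+x. F m x \<partial>M) \<le> ennreal (4 * inverse (real (Suc n)))" if "m \<ge> n" for m
    proof -
      have l2: "L2 M (\<lambda>x. g (r m) x - g (r n) x)" using L2_diff[OF gL2 gL2] .
      have "(\<integral>\<^sup>+x. F m x \<partial>M) = ennreal (N2 M (\<lambda>x. g (r m) x - g (r n) x))"
        unfolding F_def N2_def by (rule nn_integral_eq_integral) (use l2 in \<open>auto simp: L2_def\<close>)
      also have "\<dots> \<le> ennreal (4 * inverse (real (Suc n)))"
      proof (rule ennreal_leI)
        have "inverse (real (Suc (r m))) \<le> inverse (real (Suc n))"
          using inv_mono rge rmono[OF that] order_trans by blast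
        moreover have "inverse (real (Suc (r n))) \<le> inverse (real (Suc n))"
          using inv_mono rge by blast
        ultimately show "N2 M (\<lambda>x. g (r m) x - g (r n) x) \<le> 4 * inverse (real (Suc n))"
          using cauchy[of "r m" "r n"] by linarith
      qed
      finally show ?thesis .
    qed
    have Fm: "F m \<in> borel_measurable M" for m unfolding F_def using gL2 L2_meas by auto
    have "AE x in M. ennreal ((cmod (G x - g (r n) x))\<^sup>2) = liminf (\<lambda>m. F m x)"
      using aeG
    proof eventually_elim
      case (elim x)
      have "(\<lambda>m. F m x) \<longlonglongrightarrow> ennreal ((cmod (G x - g (r n) x))\<^sup>2)"
        unfolding F_def by (rule tendsto_ennrealI[OF tendsto_power[OF tendsto_norm[OF tendsto_diff[OF elim tendsto_const]]]])
      then show ?case by (simp add: lim_imp_Liminf)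
    qed
    then have "(\<integral>\<^sup>+x. ennreal ((cmod (G x - g (r n) x))\<^sup>2) \<partial>M) = (\<integral>\<^sup>+x. liminf (\<lambda>m. F m x) \<partial>M)"
      by (rule nn_integral_cong_AE)
    also have "\<dots> \<le> liminf (\<lambda>m. \<integral>\<^sup>+x. F m x \<partial>M)"
      by (rule nn_integral_liminf) (use Fm in auto)
    also have "\<dots> \<le> ennreal (4 * inverse (real (Suc n)))"
      by (rule Liminf_le) (use Fle in \<open>auto simp: eventually_sequentially\<close>)
    finally have bnd: "(\<integral>\<^sup>+x. ennreal ((cmod (G x - g (r n) x))\<^sup>2) \<partial>M) \<le> ennreal (4 * inverse (real (Suc n)))" .
    have meas: "(\<lambda>x. G x - g (r n) x) \<in> borel_measurable M" using Gm gL2 L2_meas by auto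
    have int: "integrable M (\<lambda>x. (cmod (G x - g (r n) x))\<^sup>2)"
    proof (rule integrableI_bounded)
      show "(\<lambda>x. (cmod (G x - g (r n) x))\<^sup>2) \<in> borel_measurable M" using meas by auto
      show "(\<integral>\<^sup>+x. ennreal (norm ((cmod (G x - g (r n) x))\<^sup>2)) \<partial>M) < \<infinity>"
      proof -
        have "(\<integral>\<^sup>+x. ennreal ((cmod (G x - g (r n) x))\<^sup>2) \<partial>M) < \<infinity>"
          using bnd ennreal_less_top[of "4 * inverse (real (Suc n))"] by (simp add: le_less_trans infinity_ennreal_def)
        then show ?thesis by simp
      qed
    qed
    have "ennreal (N2 M (\<lambda>x. G x - g (r n) x)) = (\<integral>\<^sup>+x. ennreal ((cmod (G x - g (r n) x))\<^sup>2) \<partial>M)"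
      unfolding N2_def by (rule nn_integral_eq_integral[symmetric]) (use int in auto)
    with bnd have "ennreal (N2 M (\<lambda>x. G x - g (r n) x)) \<le> ennreal (4 * inverse (real (Suc n)))"
      by simp
    then have "N2 M (\<lambda>x. G x - g (r n) x) \<le> 4 * inverse (real (Suc n))"
      by (subst (asm) ennreal_le_iff) auto
    then show ?thesis using meas int by (simp add: L2_def)
  qed
  define h where "h x = 1 - G x" for x
  have hL2: "L2 M h"
  proof -
    have "L2 M (\<lambda>x. (1 - g (r 0) x) - (G x - g (r 0) x))" using L2_diff[OF g1L2 conjunct1[OF Gc]] .
    then show ?thesis unfolding h_def by simp
  qed
  have orth: "(\<integral>x. \<phi> x * cnj (h x) \<partial>M) = 0" if \<phi>A: "\<phi> \<in> bidisc_algebra0" for \<phi>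
  proof -
    define P where "P = N2 M \<phi>"
    have P0: "P \<ge> 0" unfolding P_def by (rule N2_nonneg)
    have \<phi>L2: "L2 M \<phi>" using A0_L2[OF \<phi>A] .
    define J where "J = (\<integral>x. \<phi> x * cnj (h x) \<partial>M)"
    have ineq: "0 \<le> 2 * Re (t * J) + (cmod t)\<^sup>2 * P" for t
    proof -
      define e where "e n = 1 * inverse (real (Suc n)) + 2 * cmod t * sqrt ((P * 4) * inverse (real (Suc n)))" for n
      have e0: "e \<longlonglongrightarrow> 0"
      proof -
        have "e \<longlonglongrightarrow> 0 + 2 * cmod t * 0" unfolding e_def
          by (intro tendsto_add tendsto_mult tendsto_const lim_aux lim_aux2)
        then show ?thesis by simp
      qed
      have "- (2 * Re (t * J) + (cmod t)\<^sup>2 * P) \<le> e n" for n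
      proof -
        define Jn where "Jn = (\<integral>x. \<phi> x * cnj (1 - g (r n) x) \<partial>M)"
        define w where "w x = G x - g (r n) x" for x
        have wL2: "L2 M w" and wN: "N2 M w \<le> 4 * inverse (real (Suc n))" using Gc[of n] unfolding w_def by auto
        have memA0: "(\<lambda>x. g (r n) x - t * \<phi> x) \<in> A0"
          unfolding A0_def by (rule A0_diff) (use gA0 A0_def A0_cmult[OF \<phi>A] in auto)
        have "d \<le> D (\<lambda>x. g (r n) x - t * \<phi> x)" using dle[OF memA0] .
        also have "D (\<lambda>x. g (r n) x - t * \<phi> x) = D (g (r n)) + 2 * Re (t * Jn) + (cmod t)\<^sup>2 * P"
        proof -
          have i1: "integrable M (\<lambda>x. \<phi> x * cnj (1 - g (r n) x))"
            using CS(1)[OF \<phi>L2 L2_cnj[OF g1L2]] .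
          have i2: "integrable M (\<lambda>x. Re (t * (\<phi> x * cnj (1 - g (r n) x))))"
            by (rule integrable_Re, rule integrable_mult_right) (rule i1)
          have e1: "(\<integral>x. Re (t * (\<phi> x * cnj (1 - g (r n) x))) \<partial>M) = Re (t * Jn)"
          proof -
            have "(\<integral>x. Re (t * (\<phi> x * cnj (1 - g (r n) x))) \<partial>M) = Re (\<integral>x. t * (\<phi> x * cnj (1 - g (r n) x)) \<partial>M)"
              by (rule integral_Re, rule integrable_mult_right) (rule i1)
            also have "(\<integral>x. t * (\<phi> x * cnj (1 - g (r n) x)) \<partial>M) = t * Jn"
              unfolding Jn_def by (rule integral_mult_right_zero)
            finally show ?thesis .
          qed
          have "D (\<lambda>x. g (r n) x - t * \<phi> x) = (\<integral>x. (cmod (1 - g (r n) x))\<^sup>2 + 2 * Re (t * (\<phi> x * cnj (1 - g (r n) x)))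
               + (cmod t)\<^sup>2 * (cmod (\<phi> x))\<^sup>2 \<partial>M)"
            unfolding D_def N2_def
          proof (intro Bochner_Integration.integral_cong refl)
            fix x
            have "1 - (g (r n) x - t * \<phi> x) = (1 - g (r n) x) + t * \<phi> x" by simp
            then show "(cmod (1 - (g (r n) x - t * \<phi> x)))\<^sup>2 = (cmod (1 - g (r n) x))\<^sup>2 + 2 * Re (t * (\<phi> x * cnj (1 - g (r n) x)))
               + (cmod t)\<^sup>2 * (cmod (\<phi> x))\<^sup>2" by (simp only: exp_id)
          qed
          also have "\<dots> = D (g (r n)) + 2 * Re (t * Jn) + (cmod t)\<^sup>2 * P"
            using int3[OF _ i2, of "\<lambda>x. (cmod (1 - g (r n) x))\<^sup>2" "\<lambda>x. (cmod (\<phi> x))\<^sup>2" "(cmod t)\<^sup>2"]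
              g1L2[of "r n"] \<phi>L2 e1 unfolding D_def N2_def P_def L2_def by simp
          finally show ?thesis .
        qed
        finally have dl: "d \<le> D (g (r n)) + 2 * Re (t * Jn) + (cmod t)\<^sup>2 * P" .
        have "J - Jn = - (\<integral>x. \<phi> x * cnj (w x) \<partial>M)"
        proof -
          have i1: "integrable M (\<lambda>x. \<phi> x * cnj (1 - g (r n) x))"
            using CS(1)[OF \<phi>L2 L2_cnj[OF g1L2]] .
          have i3: "integrable M (\<lambda>x. \<phi> x * cnj (h x))"
            using CS(1)[OF \<phi>L2 L2_cnj[OF hL2]] .
          have "J - Jn = (\<integral>x. \<phi> x * cnj (h x) - \<phi> x * cnj (1 - g (r n) x) \<partial>M)"
            unfolding J_def Jn_def using i1 i3 by simp
          also have "\<dots> = (\<integral>x. - (\<phi> x * cnj (w x)) \<partial>M)"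
            by (intro Bochner_Integration.integral_cong refl) (simp add: h_def w_def algebra_simps)
          finally show ?thesis by simp
        qed
        then have "cmod (J - Jn) \<le> sqrt (P * N2 M w)"
          using CS(2)[OF \<phi>L2 L2_cnj[OF wL2]] by (simp add: N2_cnj P_def)
        also have "\<dots> \<le> sqrt ((P * 4) * inverse (real (Suc n)))"
          using mult_left_mono[OF wN P0] by (simp add: algebra_simps)
        finally have Jb: "cmod (J - Jn) \<le> sqrt ((P * 4) * inverse (real (Suc n)))" .
        have "Re (t * Jn) = Re (t * J) - Re (t * (J - Jn))" by (simp add: algebra_simps)
        moreover have "Re (t * (J - Jn)) \<ge> - (cmod t * cmod (J - Jn))"
          by (rule Re_bound)
        moreover have "cmod t * cmod (J - Jn) \<le> cmod t * sqrt ((P * 4) * inverse (real (Suc n)))"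
          using mult_left_mono[OF Jb] by simp
        moreover have "D (g (r n)) < d + inverse (real (Suc n))"
          using gD[of "r n"] inv_mono[OF rge[of n]] by linarith
        ultimately show ?thesis using dl unfolding e_def by linarith
      qed
      then show ?thesis using le_lim0[OF _ e0] by (metis neg_le_0_iff_le)
    qed
    define s where "s = 1 / (P + 1)"
    have s0: "s > 0" using P0 by (simp add: s_def)
    have sP: "s * P < 1" using P0 by (simp add: s_def)
    define q where "q = (cmod J)\<^sup>2"
    define t where "t = - (of_real s * cnj J)"
    have "t * J = - of_real (s * q)"
      unfolding t_def q_def using complex_norm_square[of J] by (simp add: algebra_simps)
    then have ReJ: "Re (t * J) = - (s * q)" by simp
    have ct: "(cmod t)\<^sup>2 = s\<^sup>2 * q" unfolding t_def q_def using s0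
      by (simp add: norm_mult power_mult_distrib)
    have "0 \<le> 2 * (- (s * q)) + s\<^sup>2 * q * P" using ineq[of t] ReJ ct by simp
    then have "0 \<le> s * (q * (s * P - 2))" by (simp add: algebra_simps power2_eq_square)
    then have "0 \<le> q * (s * P - 2)" using s0 by (simp add: zero_le_mult_iff)
    then have "q \<le> 0" using sP by (simp add: zero_le_mult_iff)
    then have "cmod J = 0" unfolding q_def by simp
    then show ?thesis unfolding J_def by simp
  qed
  have ann: "(\<integral>x. (cmod (h x))\<^sup>2 *\<^sub>R \<phi> x \<partial>M) = 0" if \<phi>A: "\<phi> \<in> bidisc_algebra0" for \<phi>
  proof -
    have \<phi>L2: "L2 M \<phi>" using A0_L2[OF \<phi>A] .
    obtain B where B0: "B \<ge> 0" and Bb: "\<And>x. x \<in> space M \<Longrightarrow> cmod (\<phi> x) \<le> B"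
      using A_bounded[OF A0_sub[OF \<phi>A]] by blast
    have \<phi>m: "\<phi> \<in> borel_measurable M" using \<phi>L2 L2_meas by auto
    have \<phi>hL2: "L2 M (\<lambda>x. \<phi> x * h x)" using L2_bmult(1)[OF hL2 \<phi>m Bb] .
    define X where "X = (\<integral>x. (\<phi> x * h x) * cnj (h x) \<partial>M)"
    have Xeq: "(\<integral>x. (cmod (h x))\<^sup>2 *\<^sub>R \<phi> x \<partial>M) = X"
      unfolding X_def
    proof (intro Bochner_Integration.integral_cong refl)
      fix x
      show "(cmod (h x))\<^sup>2 *\<^sub>R \<phi> x = \<phi> x * h x * cnj (h x)"
        by (simp only: scaleR_conv_of_real complex_norm_square mult_ac)
    qed
    define e where "e n = sqrt ((B\<^sup>2 * 4 * N2 M h) * inverse (real (Suc n)))" for n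
    have "cmod X \<le> e n" for n
    proof -
      define w where "w x = G x - g (r n) x" for x
      have wL2: "L2 M w" and wN: "N2 M w \<le> 4 * inverse (real (Suc n))" using Gc[of n] unfolding w_def by auto
      have \<psi>A: "(\<lambda>x. \<phi> x * (1 - g (r n) x)) \<in> bidisc_algebra0"
        by (rule A0_mult[OF \<phi>A A_diff1[OF A0_sub]]) (use gA0 A0_def in auto)
      have o: "(\<integral>x. \<phi> x * (1 - g (r n) x) * cnj (h x) \<partial>M) = 0" using orth[OF \<psi>A] .
      have \<psi>L2: "L2 M (\<lambda>x. \<phi> x * (1 - g (r n) x))" using A0_L2[OF \<psi>A] .
      have "X = X - (\<integral>x. \<phi> x * (1 - g (r n) x) * cnj (h x) \<partial>M)" using o by simp
      also have "\<dots> = (\<integral>x. (\<phi> x * h x - \<phi> x * (1 - g (r n) x)) * cnj (h x) \<partial>M)"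
        unfolding X_def by (rule int_diff_mult[OF \<phi>hL2 \<psi>L2 L2_cnj[OF hL2]])
      also have "\<dots> = (\<integral>x. - ((\<phi> x * w x) * cnj (h x)) \<partial>M)"
        by (intro Bochner_Integration.integral_cong refl) (simp add: h_def w_def algebra_simps)
      finally have "X = - (\<integral>x. (\<phi> x * w x) * cnj (h x) \<partial>M)" by simp
      then have "cmod X \<le> sqrt (N2 M (\<lambda>x. \<phi> x * w x) * N2 M h)"
        using CS(2)[OF L2_bmult(1)[OF wL2 \<phi>m Bb] L2_cnj[OF hL2]] by (simp add: N2_cnj)
      also have "\<dots> \<le> e n" unfolding e_def
      proof (rule real_sqrt_le_mono)
        have "N2 M (\<lambda>x. \<phi> x * w x) \<le> B\<^sup>2 * (4 * inverse (real (Suc n)))"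
          using L2_bmult(2)[OF wL2 \<phi>m Bb] mult_left_mono[OF wN, of "B\<^sup>2"] by simp
        then have "N2 M (\<lambda>x. \<phi> x * w x) * N2 M h \<le> B\<^sup>2 * (4 * inverse (real (Suc n))) * N2 M h"
          by (rule mult_right_mono) (rule N2_nonneg)
        then show "N2 M (\<lambda>x. \<phi> x * w x) * N2 M h \<le> B\<^sup>2 * 4 * N2 M h * inverse (real (Suc n))"
          by (simp add: algebra_simps)
      qed
      finally show ?thesis .
    qed
    then have "cmod X \<le> 0" using le_lim0[of "cmod X" e] lim_aux unfolding e_def by blast
    then show ?thesis using Xeq by simp
  qed
  have Nh: "N2 M h = 0" using H[OF hL2] ann by blast
  obtain n where n: "8 * inverse (real (Suc n)) < \<delta>"
    using ev_small[OF lim_aux2 assms(2), of 8] by blast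
  have "N2 M (\<lambda>x. 1 - g (r n) x) = N2 M (\<lambda>x. h x + (G x - g (r n) x))"
    unfolding h_def by simp
  also have "\<dots> \<le> 2 * N2 M h + 2 * N2 M (\<lambda>x. G x - g (r n) x)"
    by (rule N2_add_le[OF hL2 conjunct1[OF Gc]])
  also have "\<dots> \<le> 8 * inverse (real (Suc n))" using Nh Gc[of n] by simp
  also have "\<dots> < \<delta>" by (rule n)
  finally show ?thesis using gA0 A0_def by blast
qed

end



context L2ctx begin

lemma closure_eq:
  assumes key: "\<And>\<delta>. \<delta> > 0 \<Longrightarrow> \<exists>g\<in>bidisc_algebra0. N2 M (\<lambda>x. 1 - g x) < \<delta>"
  shows "L2_closure M bidisc_algebra0 = L2_closure M bidisc_algebra"
proof
  show "L2_closure M bidisc_algebra0 \<subseteq> L2_closure M bidisc_algebra"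
    unfolding L2_closure_def using A0_sub by fastforce
  show "L2_closure M bidisc_algebra \<subseteq> L2_closure M bidisc_algebra0"
  proof
    fix h assume "h \<in> L2_closure M bidisc_algebra"
    then have hm: "h \<in> borel_measurable M" and hi: "integrable M (\<lambda>x. (cmod (h x))\<^sup>2)"
      and ap: "\<And>e. e > 0 \<Longrightarrow> \<exists>f\<in>bidisc_algebra. (\<integral>x. (cmod (h x - f x))\<^sup>2 \<partial>M) < e"
      unfolding L2_closure_def by auto
    have hL2: "L2 M h" using hm hi by (simp add: L2_def)
    have "\<exists>k\<in>bidisc_algebra0. (\<integral>x. (cmod (h x - k x))\<^sup>2 \<partial>M) < e" if e0: "e > 0" for e
    proof -
      obtain f where fA: "f \<in> bidisc_algebra" and f: "N2 M (\<lambda>x. h x - f x) < e / 4"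
        using ap[of "e/4"] e0 unfolding N2_def by auto
      obtain B where B0: "B \<ge> 0" and Bb: "\<And>x. x \<in> space M \<Longrightarrow> cmod (f x) \<le> B"
        using A_bounded[OF fA] by blast
      have Bp: "B\<^sup>2 + 1 > 0" by (simp add: add_nonneg_pos)
      obtain g where gA: "g \<in> bidisc_algebra0" and g: "N2 M (\<lambda>x. 1 - g x) < e / (4 * (B\<^sup>2 + 1))"
        using key[of "e / (4 * (B\<^sup>2 + 1))"] e0 Bp by auto
      have kA: "(\<lambda>x. g x * f x) \<in> bidisc_algebra0" by (rule A0_mult[OF gA fA])
      have fm: "f \<in> borel_measurable M" using A_meas[OF fA] .
      have hf: "L2 M (\<lambda>x. h x - f x)" using L2_diff[OF hL2 A_L2[OF fA]] .
      have g1: "L2 M (\<lambda>x. 1 - g x)" using L2_diff[OF A_L2[OF A_one] A0_L2[OF gA]] .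
      have fg: "L2 M (\<lambda>x. f x * (1 - g x))" and fgN: "N2 M (\<lambda>x. f x * (1 - g x)) \<le> B\<^sup>2 * N2 M (\<lambda>x. 1 - g x)"
        using L2_bmult[OF g1 fm Bb] by auto
      have "B\<^sup>2 * N2 M (\<lambda>x. 1 - g x) \<le> B\<^sup>2 * (e / (4 * (B\<^sup>2 + 1)))"
        using g by (intro mult_left_mono) auto
      also have "\<dots> \<le> e / 4"
      proof -
        have "B\<^sup>2 / (B\<^sup>2 + 1) \<le> 1" using Bp by simp
        then have "B\<^sup>2 / (B\<^sup>2 + 1) * (e / 4) \<le> 1 * (e / 4)" using e0 by (intro mult_right_mono) auto
        then show ?thesis by (simp add: field_simps)
      qed
      finally have fgN': "N2 M (\<lambda>x. f x * (1 - g x)) \<le> e / 4" using fgN by linarith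
      have "N2 M (\<lambda>x. h x - g x * f x) = N2 M (\<lambda>x. (h x - f x) + f x * (1 - g x))"
        by (simp add: algebra_simps)
      also have "\<dots> \<le> 2 * N2 M (\<lambda>x. h x - f x) + 2 * N2 M (\<lambda>x. f x * (1 - g x))"
        by (rule N2_add_le[OF hf fg])
      also have "\<dots> < e" using f fgN' by linarith
      finally have lt: "N2 M (\<lambda>x. h x - g x * f x) < e" .
      show ?thesis by (rule bexI[where x="\<lambda>x. g x * f x"]) (use lt kA in \<open>simp_all add: N2_def\<close>)
    qed
    then show "h \<in> L2_closure M bidisc_algebra0" using hm hi unfolding L2_closure_def by blast
  qed
qed

end

theorem mainTheorem11:
  fixes S :: "(complex \<times> complex) set"
  assumes "S \<subseteq> torus2" and "compact S"
    and "\<not> (\<exists>\<nu>. borel_measure_on_T2 \<nu> \<and> finite_measure \<nu> \<and>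
              emeasure \<nu> (torus2 - S) = 0 \<and> emeasure \<nu> torus2 \<noteq> 0 \<and>
              (\<forall>g \<in> bidisc_algebra0. (\<integral>x. g x \<partial>\<nu>) = 0))"
  shows "\<forall>\<mu>. borel_measure_on_T2 \<mu> \<and> finite_measure \<mu> \<and> emeasure \<mu> (torus2 - S) = 0
           \<longrightarrow> L2_closure \<mu> bidisc_algebra0 = L2_closure \<mu> bidisc_algebra"
proof (intro allI impI)
  fix \<mu> :: "(complex \<times> complex) measure"
  assume asm: "borel_measure_on_T2 \<mu> \<and> finite_measure \<mu> \<and> emeasure \<mu> (torus2 - S) = 0"
  interpret L2ctx \<mu>
    by (rule L2ctx.intro) (use asm in \<open>auto simp: L2ctx_axioms_def borel_measure_on_T2_def\<close>)
  have sets\<mu>: "sets \<mu> = sets (restrict_space borel torus2)" using asm by (simp add: borel_measure_on_T2_def)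
  have TS: "torus2 - S \<in> sets \<mu>"
  proof -
    have "closed S" using assms(2) by (rule compact_imp_closed)
    then have "- S \<in> sets borel" by auto
    then have "torus2 \<inter> (- S) \<in> sets (restrict_space borel torus2)"
      by (auto simp: sets_restrict_space)
    then show ?thesis using sets\<mu> by (simp add: Diff_eq)
  qed
  have null: "emeasure \<mu> (torus2 - S) = 0" using asm by simp
  have H: "N2 \<mu> h = 0" if hL2: "L2 \<mu> h" and ann: "\<forall>\<phi>\<in>bidisc_algebra0. (\<integral>x. (cmod (h x))\<^sup>2 *\<^sub>R \<phi> x \<partial>\<mu>) = 0" for h
  proof -
    define f where "f x = (cmod (h x))\<^sup>2" for x
    have fm: "f \<in> borel_measurable \<mu>" using hL2 unfolding f_def L2_def by auto
    have fi: "integrable \<mu> f" using hL2 unfolding f_def L2_def by auto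
    have fnn: "\<And>x. 0 \<le> f x" by (simp add: f_def)
    define \<nu> where "\<nu> = density \<mu> (\<lambda>x. ennreal (f x))"
    have sets\<nu>: "sets \<nu> = sets \<mu>" unfolding \<nu>_def by simp
    have space\<nu>: "space \<nu> = torus2" unfolding \<nu>_def using space_M by simp
    have tot: "emeasure \<nu> torus2 = ennreal (N2 \<mu> h)"
    proof -
      have "emeasure \<nu> torus2 = emeasure \<nu> (space \<mu>)" using space_M by simp
      also have "\<dots> = (\<integral>\<^sup>+x. ennreal (f x) * indicator (space \<mu>) x \<partial>\<mu>)" unfolding \<nu>_def
        by (rule emeasure_density) (use fm in auto)
      also have "\<dots> = (\<integral>\<^sup>+x. ennreal (f x) \<partial>\<mu>)"
        by (rule nn_integral_cong) simp
      also have "\<dots> = ennreal (N2 \<mu> h)" unfolding N2_def f_def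
        by (rule nn_integral_eq_integral) (use hL2 in \<open>auto simp: L2_def\<close>)
      finally show ?thesis .
    qed
    have "\<not> (borel_measure_on_T2 \<nu> \<and> finite_measure \<nu> \<and>
              emeasure \<nu> (torus2 - S) = 0 \<and> emeasure \<nu> torus2 \<noteq> 0 \<and>
              (\<forall>g \<in> bidisc_algebra0. (\<integral>x. g x \<partial>\<nu>) = 0))" using assms(3) by blast
    moreover have "borel_measure_on_T2 \<nu>" using sets\<nu> sets\<mu> by (simp add: borel_measure_on_T2_def)
    moreover have "finite_measure \<nu>"
      by (rule finite_measureI) (use tot space\<nu> in simp)
    moreover have "emeasure \<nu> (torus2 - S) = 0"
    proof -
      have "emeasure \<nu> (torus2 - S) = (\<integral>\<^sup>+x. ennreal (f x) * indicator (torus2 - S) x \<partial>\<mu>)"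
        unfolding \<nu>_def by (rule emeasure_density) (use fm TS in auto)
      also have "\<dots> = (\<integral>\<^sup>+x. 0 \<partial>\<mu>)"
      proof (rule nn_integral_cong_AE)
        have "torus2 - S \<in> null_sets \<mu>" using null TS by (simp add: null_sets_def)
        then have "AE x in \<mu>. x \<notin> torus2 - S" by (rule AE_not_in)
        then show "AE x in \<mu>. ennreal (f x) * indicator (torus2 - S) x = 0"
          by eventually_elim auto
      qed
      finally show ?thesis by simp
    qed
    moreover have "\<forall>g \<in> bidisc_algebra0. (\<integral>x. g x \<partial>\<nu>) = 0"
    proof
      fix g assume gA: "g \<in> bidisc_algebra0"
      have "(\<integral>x. g x \<partial>\<nu>) = (\<integral>x. f x *\<^sub>R g x \<partial>\<mu>)" unfolding \<nu>_def
        by (rule integral_density) (use fm A_meas[OF A0_sub[OF gA]] fnn in auto)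
      then show "(\<integral>x. g x \<partial>\<nu>) = 0" using ann gA unfolding f_def by simp
    qed
    ultimately have "emeasure \<nu> torus2 = 0" by blast
    then show ?thesis using tot N2_nonneg[of \<mu> h] by simp
  qed
  show "L2_closure \<mu> bidisc_algebra0 = L2_closure \<mu> bidisc_algebra"
    by (rule closure_eq, rule key) (use H in auto)
qed

end
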